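(* Let $n\ge2$ and let $\mathcal{C}([n])$ be the lattice of one-cluster partitions of $[n]$ ordered by refinement. Then for every $\pi\in\mathcal{C}([n])$, $$\mathfrak{m}(\pi,[n])=\begin{cases}(-1)^{n-1}(n-1)&\text{if }\pi=1|2|\cdots|n,\\(-1)^{|\pi|-1}&\text{otherwise},\end{cases}$$ where $|\pi|$ is the number of blocks of $\pi$.
   Context: A one-cluster partition of $[n]$ is a set partition with at most one block of size greater than one. The refinement order: $\pi\le\nu$ iff every block of $\pi$ is contained in a block of $\nu$. The Möbius function of a finite poset is defined by $\mathfrak{m}(\pi,\pi)=1$, $\mathfrak{m}(\pi,\nu)=-\sum_{\pi\le\delta<\nu}\mathfrak{m}(\pi,\delta)$ for $\pi<\nu$, and $0$ otherwise. *)

theory Defs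
  imports "HOL-Library.Disjoint_Sets"
begin

definition refines_part :: "'a set set \<Rightarrow> 'a set set \<Rightarrow> bool" where
  "refines_part p q \<longleftrightarrow> (\<forall>B\<in>p. \<exists>C\<in>q. B \<subseteq> C)"

definition one_cluster_partitions :: "nat \<Rightarrow> nat set set set" where
  "one_cluster_partitions n =
     {p. partition_on {1..n} p \<and> card {B\<in>p. card B > 1} \<le> 1}"

text \<open>The recursion is unrolled with a fuel parameter; fuel card P suffices
  since every chain in P has at most card P elements.\<close>
fun mobius_aux :: "nat \<Rightarrow> 'a set \<Rightarrow> ('a \<Rightarrow> 'a \<Rightarrow> bool) \<Rightarrow> 'a \<Rightarrow> 'a \<Rightarrow> int" where
  "mobius_aux 0 P le x y = 0"
| "mobius_aux (Suc k) P le x y =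
     (if x = y then 1
      else if le x y then
        - (\<Sum>d\<in>{d\<in>P. le x d \<and> le d y \<and> d \<noteq> y}. mobius_aux k P le x d)
      else 0)"

definition mobius :: "'a set \<Rightarrow> ('a \<Rightarrow> 'a \<Rightarrow> bool) \<Rightarrow> 'a \<Rightarrow> 'a \<Rightarrow> int" where
  "mobius P le x y = mobius_aux (card P) P le x y"

end

theory Submission
  imports Defs
begin
lemma sum_Pow_insert:
  assumes "finite S" "a \<notin> S"
  shows "sum g (Pow (insert a S)) = sum g (Pow S) + sum (\<lambda>E. g (insert a E)) (Pow S)"
proof -
  have inj: "inj_on (insert a) (Pow S)" using assms(2) by (intro inj_onI) (metis PowD subsetD insert_ident)
  have "sum g (Pow (insert a S)) = sum g (Pow S \<union> insert a ` Pow S)" by (simp add: Pow_insert)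
  also have "\<dots> = sum g (Pow S) + sum g (insert a ` Pow S)"
    by (rule sum.union_disjoint) (use assms in auto)
  also have "sum g (insert a ` Pow S) = sum (\<lambda>E. g (insert a E)) (Pow S)"
    using sum.reindex[OF inj] by (simp add: comp_def)
  finally show ?thesis .
qed

lemma alt1:
  assumes "finite S" "S \<noteq> {}"
  shows "(\<Sum>E\<in>Pow S. (-1::int)^card E) = 0"
proof -
  obtain a T where S: "S = insert a T" "a \<notin> T" using assms(2) by (meson Set.set_insert ex_in_conv)
  have fT: "finite T" using assms S by auto
  have "(\<Sum>E\<in>Pow S. (-1::int)^card E) = (\<Sum>E\<in>Pow T. (-1::int)^card E) + (\<Sum>E\<in>Pow T. (-1::int)^card (insert a E))"
    unfolding S by (rule sum_Pow_insert[OF fT S(2)])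
  also have "(\<Sum>E\<in>Pow T. (-1::int)^card (insert a E)) = (\<Sum>E\<in>Pow T. - ((-1::int)^card E))"
  proof (rule sum.cong)
    fix E assume "E \<in> Pow T"
    then have "finite E" "a \<notin> E" using fT S(2) finite_subset by auto
    then show "(-1::int)^card (insert a E) = - ((-1::int)^card E)" by simp
  qed simp
  finally show ?thesis by (simp add: sum_negf)
qed

lemma alt2:
  assumes "finite S" "card S \<ge> 2"
  shows "(\<Sum>E\<in>Pow S. (-1::int)^card E * (1 - int (card E))) = 0"
proof -
  have "S \<noteq> {}" using assms by auto
  then obtain a T where S: "S = insert a T" "a \<notin> T" by (meson Set.set_insert ex_in_conv)
  have fT: "finite T" using assms S by auto
  have Tne: "T \<noteq> {}" using assms S by auto
  have "(\<Sum>E\<in>Pow S. (-1::int)^card E * (1 - int (card E))) =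
     (\<Sum>E\<in>Pow T. (-1::int)^card E * (1 - int (card E))) + (\<Sum>E\<in>Pow T. (-1::int)^card (insert a E) * (1 - int (card (insert a E))))"
    unfolding S by (rule sum_Pow_insert[OF fT S(2)])
  also have "(\<Sum>E\<in>Pow T. (-1::int)^card (insert a E) * (1 - int (card (insert a E)))) =
       (\<Sum>E\<in>Pow T. (-1::int)^card E * int (card E))"
  proof (rule sum.cong)
    fix E assume "E \<in> Pow T"
    then have "finite E" "a \<notin> E" using fT S(2) finite_subset by auto
    then show "(-1::int)^card (insert a E) * (1 - int (card (insert a E))) = (-1::int)^card E * int (card E)"
      by (simp add: algebra_simps)
  qed simp
  also have "(\<Sum>E\<in>Pow T. (-1::int)^card E * (1 - int (card E))) + (\<Sum>E\<in>Pow T. (-1::int)^card E * int (card E))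
      = (\<Sum>E\<in>Pow T. (-1::int)^card E)"
    by (simp add: sum.distrib[symmetric] algebra_simps)
  also have "\<dots> = 0" by (rule alt1[OF fT Tne])
  finally show ?thesis .
qed

lemma mobius_aux_transport:
  assumes "bij_betw h Q P" "\<And>a b. a\<in>Q \<Longrightarrow> b\<in>Q \<Longrightarrow> le (h a) (h b) = le' a b" "a\<in>Q" "b\<in>Q"
  shows "mobius_aux k P le (h a) (h b) = mobius_aux k Q le' a b"
  using assms(4)
proof (induction k arbitrary: b)
  case 0 then show ?case by simp
next
  case (Suc k)
  have inj: "inj_on h Q" using assms(1) by (rule bij_betw_imp_inj_on)
  have img: "h ` Q = P" using assms(1) by (rule bij_betw_imp_surj_on)
  have eq: "(h a = h b) = (a = b)" using inj assms(3) Suc.prems inj_on_eq_iff by metis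
  let ?S = "{d\<in>Q. le' a d \<and> le' d b \<and> d \<noteq> b}"
  have set: "{d\<in>P. le (h a) d \<and> le d (h b) \<and> d \<noteq> h b} = h ` ?S"
  proof
    show "{d\<in>P. le (h a) d \<and> le d (h b) \<and> d \<noteq> h b} \<subseteq> h ` ?S"
    proof
      fix d assume d: "d \<in> {d\<in>P. le (h a) d \<and> le d (h b) \<and> d \<noteq> h b}"
      then obtain e where e: "e \<in> Q" "d = h e" using img by auto
      then show "d \<in> h ` ?S" using d assms(2)[OF assms(3) e(1)] assms(2)[OF e(1) Suc.prems] by auto
    qed
    show "h ` ?S \<subseteq> {d\<in>P. le (h a) d \<and> le d (h b) \<and> d \<noteq> h b}"
      using assms(2)[OF assms(3)] assms(2)[OF _ Suc.prems] img Suc.prems inj inj_on_eq_iff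
      by fastforce
  qed
  have "(\<Sum>d\<in>{d\<in>P. le (h a) d \<and> le d (h b) \<and> d \<noteq> h b}. mobius_aux k P le (h a) d)
        = (\<Sum>d\<in>?S. mobius_aux k P le (h a) (h d))"
    unfolding set by (rule sum.reindex_cong[where l=h]) (use inj in \<open>auto intro: inj_on_subset\<close>)
  also have "\<dots> = (\<Sum>d\<in>?S. mobius_aux k Q le' a d)"
    by (rule sum.cong) (auto intro: Suc.IH)
  finally show ?case using eq assms(2)[OF assms(3) Suc.prems] by simp
qed

definition Fm :: "nat set \<Rightarrow> nat set \<Rightarrow> int" where
  "Fm C D = (if C = {} then (-1)^card D * (1 - int (card D)) else (-1)^(card D - card C))"

definition need :: "nat set \<Rightarrow> nat set \<Rightarrow> nat" where
  "need C D = (if C = {} then max 1 (card D) else card D - card C + 1)"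

lemma key_sum:
  assumes Q: "Q = {D. D \<subseteq> {1..(n::nat)} \<and> card D \<noteq> 1}" and C: "C \<in> Q" and D: "D \<in> Q"
    and CD: "C \<subseteq> D" "C \<noteq> D"
  shows "(\<Sum>d\<in>{d\<in>Q. C \<subseteq> d \<and> d \<subseteq> D}. Fm C d) = 0"
proof (cases "C = {}")
  case True
  have fD: "finite D" using D Q finite_subset by auto
  have "D \<noteq> {}" using CD True by auto
  then have "card D \<noteq> 0" using fD by simp
  moreover have "card D \<noteq> 1" using D Q by simp
  ultimately have cD: "card D \<ge> 2" by linarith
  have sub: "{d\<in>Q. C \<subseteq> d \<and> d \<subseteq> D} \<subseteq> Pow D" by auto
  have "(\<Sum>d\<in>{d\<in>Q. C \<subseteq> d \<and> d \<subseteq> D}. Fm C d) = (\<Sum>d\<in>Pow D. Fm C d)"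
  proof (rule sum.mono_neutral_left[OF _ sub])
    show "finite (Pow D)" using fD by simp
    show "\<forall>i\<in>Pow D - {d \<in> Q. C \<subseteq> d \<and> d \<subseteq> D}. Fm C i = 0"
      using True D Q by (auto simp: Fm_def)
  qed
  also have "\<dots> = (\<Sum>E\<in>Pow D. (-1::int)^card E * (1 - int (card E)))"
    using True by (simp add: Fm_def)
  also have "\<dots> = 0" by (rule alt2[OF fD cD])
  finally show ?thesis .
next
  case False
  have fD: "finite D" using D Q finite_subset by auto
  have fC: "finite C" using fD CD finite_subset by auto
  have "card C \<noteq> 0" using fC False by simp
  moreover have "card C \<noteq> 1" using C Q by simp
  ultimately have cC: "card C \<ge> 2" by linarith
  have set: "{d\<in>Q. C \<subseteq> d \<and> d \<subseteq> D} = (\<lambda>E. C \<union> E) ` Pow (D - C)"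
  proof
    show "{d\<in>Q. C \<subseteq> d \<and> d \<subseteq> D} \<subseteq> (\<lambda>E. C \<union> E) ` Pow (D - C)"
    proof
      fix d assume "d \<in> {d\<in>Q. C \<subseteq> d \<and> d \<subseteq> D}"
      then have "d = C \<union> (d - C)" "d - C \<in> Pow (D - C)" by auto
      then show "d \<in> (\<lambda>E. C \<union> E) ` Pow (D - C)" by blast
    qed
    show "(\<lambda>E. C \<union> E) ` Pow (D - C) \<subseteq> {d\<in>Q. C \<subseteq> d \<and> d \<subseteq> D}"
    proof
      fix d assume "d \<in> (\<lambda>E. C \<union> E) ` Pow (D - C)"
      then obtain E where E: "E \<subseteq> D - C" "d = C \<union> E" by auto
      have "card C \<le> card d" using E fD fC by (intro card_mono) (auto intro: finite_subset)
      then show "d \<in> {d\<in>Q. C \<subseteq> d \<and> d \<subseteq> D}" using E cC D CD Q by auto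
    qed
  qed
  have inj: "inj_on (\<lambda>E. C \<union> E) (Pow (D - C))" unfolding inj_on_def by blast
  have "(\<Sum>d\<in>{d\<in>Q. C \<subseteq> d \<and> d \<subseteq> D}. Fm C d) = (\<Sum>E\<in>Pow (D - C). Fm C (C \<union> E))"
    unfolding set using sum.reindex[OF inj] by (simp add: comp_def)
  also have "\<dots> = (\<Sum>E\<in>Pow (D - C). (-1::int)^card E)"
  proof (rule sum.cong)
    fix E assume "E \<in> Pow (D - C)"
    then have "E \<subseteq> D - C" by auto
    then have "card (C \<union> E) = card C + card E" using fD fC
      by (subst card_Un_disjoint) (auto intro: finite_subset)
    then show "Fm C (C \<union> E) = (-1::int)^card E" using False by (simp add: Fm_def)
  qed simp
  also have "\<dots> = 0" by (rule alt1) (use fD CD in auto)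
  finally show ?thesis .
qed

lemma main_Q:
  assumes Q: "Q = {D. D \<subseteq> {1..(n::nat)} \<and> card D \<noteq> 1}" and C: "C \<in> Q"
  shows "D \<in> Q \<Longrightarrow> C \<subseteq> D \<Longrightarrow> k \<ge> need C D \<Longrightarrow> mobius_aux k Q (\<subseteq>) C D = Fm C D"
proof (induction k arbitrary: D)
  case 0 then show ?case by (simp add: need_def split: if_splits)
next
  case (Suc k)
  show ?case
  proof (cases "C = D")
    case True then show ?thesis by (simp add: Fm_def)
  next
    case False
    have fD: "finite D" using Suc.prems Q finite_subset by auto
    let ?S = "{d\<in>Q. C \<subseteq> d \<and> d \<subseteq> D \<and> d \<noteq> D}"
    have "(\<Sum>d\<in>?S. mobius_aux k Q (\<subseteq>) C d) = (\<Sum>d\<in>?S. Fm C d)"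
    proof (rule sum.cong)
      fix d assume d: "d \<in> ?S"
      have lt: "card d < card D" using d fD by (intro psubset_card_mono) auto
      have "need C d \<le> k"
      proof (cases "C = {}")
        case True
        have "D \<noteq> {}" using True False by simp
        then have "card D \<noteq> 0" using fD by simp
        moreover have "card D \<noteq> 1" using Suc.prems Q by simp
        ultimately have "card D \<noteq> 1" "card D \<ge> 1" by auto
        then show ?thesis using True lt Suc.prems(3) by (auto simp: need_def)
      next
        case F: False
        have "card C \<le> card d" using d fD by (intro card_mono) (auto intro: finite_subset)
        then show ?thesis using F lt Suc.prems(3) by (auto simp: need_def)
      qed
      then show "mobius_aux k Q (\<subseteq>) C d = Fm C d" using d by (intro Suc.IH) auto
    qed simp
    moreover have "{d\<in>Q. C \<subseteq> d \<and> d \<subseteq> D} = insert D ?S" using Suc.prems by auto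
    moreover have "finite Q" unfolding Q by (rule finite_subset[of _ "Pow {1..n}"]) auto
    ultimately have "(\<Sum>d\<in>?S. mobius_aux k Q (\<subseteq>) C d) = - Fm C D"
      using key_sum[OF Q C Suc.prems(1,2) False] by (simp add: sum.insert_remove)
    then show ?thesis using False Suc.prems by simp
  qed
qed

definition hh :: "nat \<Rightarrow> nat set \<Rightarrow> nat set set" where
  "hh n D = (if D = {} then {} else {D}) \<union> (\<lambda>i. {i}) ` ({1..n} - D)"

lemma hh_P:
  assumes "D \<subseteq> {1..n}" "card D \<noteq> 1"
  shows "hh n D \<in> one_cluster_partitions n"
proof -
  have "partition_on {1..n} (hh n D)"
    unfolding partition_on_def disjoint_def hh_def using assms(1) by auto
  moreover have "{B\<in>hh n D. card B > 1} \<subseteq> {D}" unfolding hh_def by auto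
  then have "card {B\<in>hh n D. card B > 1} \<le> 1"
    using card_mono[of "{D}"] by simp
  ultimately show ?thesis unfolding one_cluster_partitions_def by simp
qed

lemma hh_ref:
  assumes "C \<subseteq> {1..n}" "card C \<noteq> 1" "D \<subseteq> {1..n}" "card D \<noteq> 1"
  shows "refines_part (hh n C) (hh n D) = (C \<subseteq> D)"
proof
  assume r: "refines_part (hh n C) (hh n D)"
  show "C \<subseteq> D"
  proof (cases "C = {}")
    case False
    then have "C \<in> hh n C" unfolding hh_def by simp
    then obtain B where B: "B \<in> hh n D" "C \<subseteq> B" using r unfolding refines_part_def by blast
    have fC: "finite C" using assms(1) finite_subset by auto
    show ?thesis
    proof (cases "B = D")
      case False
      then obtain i where "B = {i}" using B(1) unfolding hh_def by (auto split: if_splits)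
      then have "card C \<le> 1" using B(2) card_mono[of "{i}" C] by simp
      moreover have "card C \<noteq> 0" using fC \<open>C \<noteq> {}\<close> by simp
      ultimately show ?thesis using assms(2) by linarith
    qed (use B in auto)
  qed simp
next
  assume "C \<subseteq> D"
  then show "refines_part (hh n C) (hh n D)"
    unfolding refines_part_def hh_def by auto
qed

lemma singleton_block:
  assumes "partition_on A p" "finite A" "B \<in> p" "\<not> card B > 1"
  shows "\<exists>j. B = {j}"
proof -
  have "B \<noteq> {}" using assms unfolding partition_on_def by auto
  moreover have "finite B" using assms unfolding partition_on_def by (metis Union_upper finite_subset)
  ultimately have "card B = 1" using assms(4) by (simp add: Suc_leI card_gt_0_iff le_antisym)
  then show ?thesis by (metis card_1_singletonE)
qed

lemma hh_surj:
  assumes "p \<in> one_cluster_partitions n"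
  shows "\<exists>D. D \<subseteq> {1..n} \<and> card D \<noteq> 1 \<and> p = hh n D"
proof -
  have pa: "partition_on {1..n} p" and c: "card {B\<in>p. card B > 1} \<le> 1"
    using assms unfolding one_cluster_partitions_def by auto
  have U: "\<Union>p = {1..n}" and dj: "disjoint p" and ne: "{} \<notin> p" using pa unfolding partition_on_def by auto
  have fp: "finite p" using U by (metis finite_UnionD finite_atLeastAtMost)
  have fB: "finite {B\<in>p. card B > 1}" by (rule finite_subset[OF _ fp]) auto
  have "card {B\<in>p. card B > 1} = 0 \<or> card {B\<in>p. card B > 1} = 1" using c by linarith
  then consider "{B\<in>p. card B > 1} = {}" | B0 where "{B\<in>p. card B > 1} = {B0}"
    using fB card_1_singletonE by (metis card_0_eq)
  then show ?thesis
  proof cases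
    case 1
    have "p = hh n {}"
    proof
      show "p \<subseteq> hh n {}"
      proof
        fix B assume B: "B \<in> p"
        then have "\<not> card B > 1" using 1 by auto
        then obtain j where j: "B = {j}" using singleton_block[OF pa _ B] by auto
        then have "j \<in> {1..n}" using U B by auto
        then show "B \<in> hh n {}" using j unfolding hh_def by auto
      qed
      show "hh n {} \<subseteq> p"
      proof
        fix B assume "B \<in> hh n {}"
        then obtain i where i: "B = {i}" "i \<in> {1..n}" unfolding hh_def by auto
        then obtain B' where B': "B' \<in> p" "i \<in> B'" using U by blast
        then have "\<not> card B' > 1" using 1 by auto
        then obtain j where "B' = {j}" using singleton_block[OF pa _ B'(1)] by auto
        then show "B \<in> p" using B' i by auto
      qed
    qed
    then show ?thesis by auto
  next
    case 2
    have B0: "B0 \<in> p" "card B0 > 1" using 2 by auto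
    have B0s: "B0 \<subseteq> {1..n}" using U B0 by auto
    have "p = hh n B0"
    proof
      show "p \<subseteq> hh n B0"
      proof
        fix B assume B: "B \<in> p"
        show "B \<in> hh n B0"
        proof (cases "card B > 1")
          case True then have "B = B0" using 2 B by auto
          then show ?thesis using B0 unfolding hh_def by auto
        next
          case False
          then obtain j where j: "B = {j}" using singleton_block[OF pa _ B] by auto
          then have "B \<noteq> B0" using B0 by auto
          then have "B \<inter> B0 = {}" using dj B B0(1) unfolding disjoint_def by simp
          then have "j \<notin> B0" using j by simp
          moreover have "j \<in> {1..n}" using U B j by auto
          ultimately show ?thesis using j unfolding hh_def by auto
        qed
      qed
      show "hh n B0 \<subseteq> p"
      proof
        fix B assume B: "B \<in> hh n B0"
        show "B \<in> p"
        proof (cases "B = B0")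
          case False
          then obtain i where i: "B = {i}" "i \<in> {1..n}" "i \<notin> B0" using B unfolding hh_def by (auto split: if_splits)
          then obtain B' where B': "B' \<in> p" "i \<in> B'" using U by blast
          then have "B' \<noteq> B0" using i by auto
          then have "\<not> card B' > 1" using 2 B' by auto
          then obtain j where "B' = {j}" using singleton_block[OF pa _ B'(1)] by auto
          then show "B \<in> p" using B' i by auto
        qed (use B0 in auto)
      qed
    qed
    then show ?thesis using B0 B0s by auto
  qed
qed


theorem mainTheorem11:
  fixes n :: nat and \<pi> :: "nat set set"
  assumes "n \<ge> 2" and "\<pi> \<in> one_cluster_partitions n"
  shows "mobius (one_cluster_partitions n) refines_part \<pi> {{1..n}} =
           (if \<pi> = (\<lambda>i. {i}) ` {1..n}
            then (-1) ^ (n - 1) * int (n - 1)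
            else (-1) ^ (card \<pi> - 1))"
proof -
  define Q where "Q = {D. D \<subseteq> {1..n} \<and> card D \<noteq> 1}"
  define P where "P = one_cluster_partitions n"
  have ref: "\<And>a b. a \<in> Q \<Longrightarrow> b \<in> Q \<Longrightarrow> refines_part (hh n a) (hh n b) = (a \<subseteq> b)"
    unfolding Q_def using hh_ref by blast
  have inj: "inj_on (hh n) Q"
  proof (rule inj_onI)
    fix a b assume ab: "a \<in> Q" "b \<in> Q" "hh n a = hh n b"
    have "refines_part (hh n a) (hh n a)" unfolding refines_part_def by blast
    then show "a = b" using ref[OF ab(1,2)] ref[OF ab(2,1)] ab(3) by auto
  qed
  have img: "hh n ` Q = P"
  proof
    show "hh n ` Q \<subseteq> P" unfolding Q_def P_def using hh_P by blast
    show "P \<subseteq> hh n ` Q" unfolding Q_def P_def using hh_surj by blast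
  qed
  have bij: "bij_betw (hh n) Q P" using inj img by (simp add: bij_betw_def)
  obtain D where D: "D \<in> Q" "\<pi> = hh n D" using hh_surj[OF assms(2)] unfolding Q_def by blast
  have Dfin: "finite D" using D(1) finite_subset unfolding Q_def by auto
  have topQ: "{1..n} \<in> Q" using assms(1) unfolding Q_def by simp
  have top: "{{1..n}} = hh n {1..n}" using assms(1) unfolding hh_def by auto
  have emQ: "{} \<in> Q" unfolding Q_def by simp
  have finQ: "finite Q" unfolding Q_def by (rule finite_subset[of _ "Pow {1..n}"]) auto
  have cardPQ: "card P = card Q" using bij bij_betw_same_card by metis
  have "insert {} ((\<lambda>j. {1..j}) ` {2..n}) \<subseteq> Q" unfolding Q_def by auto
  then have "card (insert {} ((\<lambda>j::nat. {1..j}) ` {2..n})) \<le> card Q" using finQ card_mono by blast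
  moreover have "inj_on (\<lambda>j::nat. {1..j}) {2..n}" by (rule inj_onI) auto
  then have "card (insert {} ((\<lambda>j::nat. {1..j}) ` {2..n})) = n"
    using assms(1) by (subst card_insert_disjoint) (auto simp: card_image)
  ultimately have cQ: "n \<le> card Q" by simp
  have needle: "need D {1..n} \<le> card Q"
  proof (cases "D = {}")
    case True then show ?thesis using cQ assms(1) by (simp add: need_def)
  next
    case False then have "card D \<noteq> 0" using Dfin by simp
    then show ?thesis using cQ False assms(1) by (simp add: need_def)
  qed
  have Dsub: "D \<subseteq> {1..n}" using D(1) unfolding Q_def by simp
  have "mobius P refines_part \<pi> {{1..n}} = mobius_aux (card P) P refines_part (hh n D) (hh n {1..n})"
    unfolding mobius_def D(2) top by simp
  also have "\<dots> = mobius_aux (card P) Q (\<subseteq>) D {1..n}"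
    by (rule mobius_aux_transport[where le=refines_part and le'="(\<subseteq>)", OF bij ref D(1) topQ])
  also have "\<dots> = Fm D {1..n}"
    using main_Q[OF Q_def D(1) topQ Dsub] needle cardPQ by simp
  finally have M: "mobius P refines_part \<pi> {{1..n}} = Fm D {1..n}" .
  show ?thesis
  proof (cases "D = {}")
    case True
    have disc: "\<pi> = (\<lambda>i. {i}) ` {1..n}" using D(2) True unfolding hh_def by simp
    obtain m where m: "n = Suc m" using assms(1) by (cases n) auto
    have "Fm D {1..n} = (-1) ^ (n - 1) * int (n - 1)"
      using True unfolding Fm_def m by (simp add: algebra_simps)
    then show ?thesis using M disc P_def by simp
  next
    case False
    have "card D \<noteq> 0" using False Dfin by simp
    moreover have "card D \<noteq> 1" using D(1) unfolding Q_def by simp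
    ultimately have cD: "card D \<ge> 2" by linarith
    have ne: "\<pi> \<noteq> (\<lambda>i. {i}) ` {1..n}"
    proof
      assume "\<pi> = (\<lambda>i. {i}) ` {1..n}"
      then have "hh n D = hh n {}" using D(2) unfolding hh_def by simp
      then show False using inj D(1) emQ False inj_on_eq_iff by metis
    qed
    have notin: "D \<notin> (\<lambda>i. {i}) ` ({1..n} - D)" using cD by auto
    have "card \<pi> = Suc (card ((\<lambda>i. {i}) ` ({1..n} - D)))"
      using D(2) False notin unfolding hh_def by simp
    also have "\<dots> = Suc (n - card D)"
      using Dsub by (subst card_image) (auto simp: card_Diff_subset Dfin)
    finally have "card \<pi> - 1 = n - card D" by simp
    moreover have "Fm D {1..n} = (-1) ^ (n - card D)" using False unfolding Fm_def by simp
    ultimately show ?thesis using M ne P_def by simp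
  qed
qed

end
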